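(* Let $\alpha\in(0,1]$, $x\in S$, $\pi\in\Pi$. The functional $\rho^\pi_{\alpha,x}: L^\infty(\Omega,\mathcal{B}(\Omega),P_x^\pi)\to\mathbb{R}$ is coherent, i.e., for all $Y_1,Y_2\in L^\infty$: (monotonicity) $Y_1\le Y_2$ a.e. implies $\rho^\pi_{\alpha,x}(Y_1)\le\rho^\pi_{\alpha,x}(Y_2)$; (subadditivity) $\rho^\pi_{\alpha,x}(Y_1+Y_2)\le \rho^\pi_{\alpha,x}(Y_1)+\rho^\pi_{\alpha,x}(Y_2)$; (translation equivariance) $\rho^\pi_{\alpha,x}(Y_1+a)=\rho^\pi_{\alpha,x}(Y_1)+a$ for $a\in\mathbb{R}$; (positive homogeneity) $\rho^\pi_{\alpha,x}(\lambda Y_1)=\lambda\rho^\pi_{\alpha,x}(Y_1)$ for $0\le\lambda<\infty$. Moreover, for every $Y\in L^\infty(\Omega,\mathcal{B}(\Omega),P_x^\pi)$, $$E_x^\pi(Y)\le \rho^\pi_{\alpha,x}(Y)\le \mathrm{CVaR}^\pi_{\alpha,x}(Y).$$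
   Context: Setting: $S$, $A$, $W$ are Borel spaces, $T\in\mathbb{N}$, $\Omega=(S\times A)^T\times S$ with Borel $\sigma$-algebra $\mathcal{B}(\Omega)$; $\omega=(x_0,u_0,\dots,x_{T-1},u_{T-1},x_T)$, $X_t(\omega)=x_t$, $U_t(\omega)=u_t$. $f:S\times A\times W\to S$ is Borel measurable, $P_D$ a distribution on $W$, and $Q(B\mid x,u)=P_D(\{d\in W: f(x,u,d)\in B\})$. $\Pi$ is the set of randomized history-dependent policies (Borel stochastic kernels $\pi_t$ on $A$ given $(S\times A)^t\times S$, $t=0,\dots,T-1$), and $P_x^\pi$ the induced probability measure on $\Omega$ with $X_0=x$, $U_t\sim\pi_t(\cdot\mid\text{history})$, $X_{t+1}\sim Q(\cdot\mid X_t,U_t)$; $E_x^\pi$ its expectation. For integrable $Y$, $\mathrm{CVaR}^\pi_{\alpha,x}(Y):=\inf_{s\in\mathbb{R}}(s+\tfrac1\alpha E_x^\pi(\max(Y-s,0)))$. For $(x,u)\in S\times A$, $\mathcal{R}_\alpha(x,u)$ is the set of Borel-measurable $\nu:S\to\mathbb{R}$ with $0\le\nu\le\alpha^{-1/T}$ $Q(\cdot\mid x,u)$-a.e. and $\int_S\nu\,\mathrm{d}Q(\cdot\mid x,u)=1$. $\mathcal{D}_\alpha$ is the set of tuples $(\xi_0,\dots,\xi_{T-1})$ where each $\xi_t(\cdot\mid\cdot,\cdot):S\times S\times A\to\mathbb{R}$ is Borel measurable and $\xi_t(\cdot\mid x,u)\in\mathcal{R}_\alpha(x,u)$ for every $(x,u)\in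 S\times A$. For $Y\in L^\infty(\Omega,\mathcal{B}(\Omega),P_x^\pi)$, $$\rho^\pi_{\alpha,x}(Y):=\sup_{(\xi_0,\dots,\xi_{T-1})\in\mathcal{D}_\alpha}\int_\Omega Y(\omega)\prod_{t=0}^{T-1}\xi_t(x_{t+1}\mid x_t,u_t)\,\mathrm{d}P_x^\pi(\omega).$$ *)

theory Defs
  imports "HOL-Probability.Probability"
begin

text \<open>Histories of length t: states x_0..x_t (extensional on {..t}) and actions
  u_0..u_{t-1} (extensional on {..<t}), with the Borel product sigma-algebra.
  The sample space Omega is H T.\<close>

definition H :: "nat \<Rightarrow> ((nat \<Rightarrow> 's::topological_space) \<times> (nat \<Rightarrow> 'a::topological_space)) measure" where
  "H t = (PiM {..t} (\<lambda>_. borel)) \<Otimes>\<^sub>M (PiM {..<t} (\<lambda>_. borel))"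

definition kernelQ :: "'w measure \<Rightarrow> ('s::topological_space \<Rightarrow> 'a \<Rightarrow> 'w \<Rightarrow> 's) \<Rightarrow> 's \<Rightarrow> 'a \<Rightarrow> 's measure" where
  "kernelQ PD f x u = distr PD borel (\<lambda>d. f x u d)"

definition is_policy :: "nat \<Rightarrow> (nat \<Rightarrow> (nat \<Rightarrow> 's::topological_space) \<times> (nat \<Rightarrow> 'a::topological_space) \<Rightarrow> 'a measure) \<Rightarrow> bool" where
  "is_policy T \<pi> \<longleftrightarrow> (\<forall>t<T. \<pi> t \<in> H t \<rightarrow>\<^sub>M prob_algebra borel)"

fun Ptraj :: "('s::topological_space \<Rightarrow> 'a::topological_space \<Rightarrow> 's measure)
    \<Rightarrow> (nat \<Rightarrow> (nat \<Rightarrow> 's) \<times> (nat \<Rightarrow> 'a) \<Rightarrow> 'a measure) \<Rightarrow> 's \<Rightarrow> nat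
    \<Rightarrow> ((nat \<Rightarrow> 's) \<times> (nat \<Rightarrow> 'a)) measure" where
  "Ptraj Q \<pi> x 0 = return (H 0) (restrict (\<lambda>_. x) {..0}, restrict (\<lambda>_. undefined) {..<0})"
| "Ptraj Q \<pi> x (Suc t) =
     bind (Ptraj Q \<pi> x t) (\<lambda>h. bind (\<pi> t h) (\<lambda>u. bind (Q (fst h t) u) (\<lambda>y.
        return (H (Suc t))
          (restrict ((fst h)(Suc t := y)) {..Suc t}, restrict ((snd h)(t := u)) {..<Suc t}))))"

definition Px :: "'w measure \<Rightarrow> ('s::topological_space \<Rightarrow> 'a::topological_space \<Rightarrow> 'w \<Rightarrow> 's)
    \<Rightarrow> (nat \<Rightarrow> (nat \<Rightarrow> 's) \<times> (nat \<Rightarrow> 'a) \<Rightarrow> 'a measure) \<Rightarrow> nat \<Rightarrow> 's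
    \<Rightarrow> ((nat \<Rightarrow> 's) \<times> (nat \<Rightarrow> 'a)) measure" where
  "Px PD f \<pi> T x = Ptraj (kernelQ PD f) \<pi> x T"

text \<open>Essentially bounded measurable real random variables (representatives of L^infinity).\<close>
definition Linf :: "'b measure \<Rightarrow> ('b \<Rightarrow> real) \<Rightarrow> bool" where
  "Linf M Y \<longleftrightarrow> Y \<in> borel_measurable M \<and> (\<exists>B. AE \<omega> in M. \<bar>Y \<omega>\<bar> \<le> B)"

definition Rset :: "real \<Rightarrow> nat \<Rightarrow> 's::topological_space measure \<Rightarrow> ('s \<Rightarrow> real) set" where
  "Rset \<alpha> T M = {\<nu>. \<nu> \<in> borel_measurable borel
      \<and> (AE y in M. 0 \<le> \<nu> y \<and> \<nu> y \<le> \<alpha> powr (- 1 / real T))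
      \<and> integral\<^sup>L M \<nu> = 1}"

text \<open>The set D_alpha; xi t y x u stands for xi_t(y | x, u). Only t < T is relevant.\<close>
definition Dset :: "('s::topological_space \<Rightarrow> 'a::topological_space \<Rightarrow> 's measure) \<Rightarrow> nat \<Rightarrow> real
    \<Rightarrow> (nat \<Rightarrow> 's \<Rightarrow> 's \<Rightarrow> 'a \<Rightarrow> real) set" where
  "Dset Q T \<alpha> = {\<xi>. \<forall>t<T.
      (\<lambda>(y, x, u). \<xi> t y x u) \<in> borel_measurable (borel \<Otimes>\<^sub>M borel \<Otimes>\<^sub>M borel)
      \<and> (\<forall>x u. (\<lambda>y. \<xi> t y x u) \<in> Rset \<alpha> T (Q x u))}"

definition rho :: "('s::topological_space \<Rightarrow> 'a::topological_space \<Rightarrow> 's measure) \<Rightarrow> nat \<Rightarrow> real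
    \<Rightarrow> ((nat \<Rightarrow> 's) \<times> (nat \<Rightarrow> 'a)) measure \<Rightarrow> ((nat \<Rightarrow> 's) \<times> (nat \<Rightarrow> 'a) \<Rightarrow> real) \<Rightarrow> real" where
  "rho Q T \<alpha> P Y = (SUP \<xi> \<in> Dset Q T \<alpha>.
      \<integral>\<omega>. Y \<omega> * (\<Prod>t<T. \<xi> t (fst \<omega> (Suc t)) (fst \<omega> t) (snd \<omega> t)) \<partial>P)"

definition CVaR :: "real \<Rightarrow> 'b measure \<Rightarrow> ('b \<Rightarrow> real) \<Rightarrow> real" where
  "CVaR \<alpha> P Y = (INF s::real. s + 1 / \<alpha> * (\<integral>\<omega>. max (Y \<omega> - s) 0 \<partial>P))"

end

theory Submission
  imports Defs
begin


lemma H_fst: "i \<le> t \<Longrightarrow> (\<lambda>h. fst h i) \<in> H t \<rightarrow>\<^sub>M borel"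
  unfolding H_def by (rule measurable_compose[OF measurable_fst measurable_component_singleton]) auto

lemma H_snd: "i < t \<Longrightarrow> (\<lambda>h. snd h i) \<in> H t \<rightarrow>\<^sub>M borel"
  unfolding H_def by (rule measurable_compose[OF measurable_snd measurable_component_singleton]) auto

definition ext :: "nat \<Rightarrow> ((nat \<Rightarrow> 's) \<times> (nat \<Rightarrow> 'a)) \<Rightarrow> 'a \<Rightarrow> 's \<Rightarrow> ((nat \<Rightarrow> 's) \<times> (nat \<Rightarrow> 'a))" where
 "ext t h u y = (restrict ((fst h)(Suc t := y)) {..Suc t}, restrict ((snd h)(t := u)) {..<Suc t})"

lemma ext_meas: "(\<lambda>((h,u),y). ext t h u y) \<in> (H t \<Otimes>\<^sub>M borel) \<Otimes>\<^sub>M borel \<rightarrow>\<^sub>M (H (Suc t) :: ((nat \<Rightarrow> 's::topological_space) \<times> (nat \<Rightarrow> 'a::topological_space)) measure)"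
proof -
  have 1: "(\<lambda>z. \<lambda>i\<in>{..Suc t}. (case z of ((h,u),y) \<Rightarrow> (fst h)(Suc t := y)) i) \<in> (H t \<Otimes>\<^sub>M (borel::'a measure)) \<Otimes>\<^sub>M (borel::'s measure) \<rightarrow>\<^sub>M PiM {..Suc t} (\<lambda>_. borel)"
  proof (rule measurable_restrict)
    fix i assume "i \<in> {..Suc t}"
    show "(\<lambda>z. (case z of ((h,u),y) \<Rightarrow> (fst h)(Suc t := y)) i) \<in> (H t \<Otimes>\<^sub>M (borel::'a measure)) \<Otimes>\<^sub>M (borel::'s measure) \<rightarrow>\<^sub>M borel"
    proof (cases "i = Suc t")
      case True then show ?thesis by (simp add: case_prod_beta)
    next
      case False
      with \<open>i \<in> {..Suc t}\<close> have "i \<le> t" by auto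
      then show ?thesis using False
        by (simp add: case_prod_beta) (rule measurable_compose[OF _ H_fst]; measurable)
    qed
  qed
  have 2: "(\<lambda>z. \<lambda>i\<in>{..<Suc t}. (case z of ((h,u),y) \<Rightarrow> (snd h)(t := u)) i) \<in> (H t \<Otimes>\<^sub>M (borel::'a measure)) \<Otimes>\<^sub>M (borel::'s measure) \<rightarrow>\<^sub>M PiM {..<Suc t} (\<lambda>_. borel)"
  proof (rule measurable_restrict)
    fix i assume "i \<in> {..<Suc t}"
    show "(\<lambda>z. (case z of ((h,u),y) \<Rightarrow> (snd h)(t := u)) i) \<in> (H t \<Otimes>\<^sub>M (borel::'a measure)) \<Otimes>\<^sub>M (borel::'s measure) \<rightarrow>\<^sub>M borel"
    proof (cases "i = t")
      case True then show ?thesis by (simp add: case_prod_beta)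
    next
      case False
      with \<open>i \<in> {..<Suc t}\<close> have "i < t" by auto
      then show ?thesis using False
        by (simp add: case_prod_beta) (rule measurable_compose[OF _ H_snd]; measurable)
    qed
  qed
  have eq: "(\<lambda>((h,u),y). ext t h u y) = (\<lambda>z. ((\<lambda>i\<in>{..Suc t}. (case z of ((h,u),y) \<Rightarrow> (fst h)(Suc t := y)) i),
     (\<lambda>i\<in>{..<Suc t}. (case z of ((h,u),y) \<Rightarrow> (snd h)(t := u)) i)))"
    by (auto simp: ext_def fun_eq_iff restrict_def)
  show ?thesis unfolding eq
    using measurable_Pair[OF 1 2] by (simp add: H_def)
qed

definition K :: "('s::topological_space \<Rightarrow> 'a::topological_space \<Rightarrow> 's measure)
    \<Rightarrow> (nat \<Rightarrow> (nat \<Rightarrow> 's) \<times> (nat \<Rightarrow> 'a) \<Rightarrow> 'a measure) \<Rightarrow> nat \<Rightarrow> (nat \<Rightarrow> 's) \<times> (nat \<Rightarrow> 'a)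
    \<Rightarrow> ((nat \<Rightarrow> 's) \<times> (nat \<Rightarrow> 'a)) measure" where
  "K Q \<pi> t h = bind (\<pi> t h) (\<lambda>u. bind (Q (fst h t) u) (\<lambda>y. return (H (Suc t)) (ext t h u y)))"

lemma Ptraj_Suc: "Ptraj Q \<pi> x (Suc t) = bind (Ptraj Q \<pi> x t) (K Q \<pi> t)"
  unfolding K_def[abs_def] ext_def by simp

lemma Q_inner_meas:
  fixes Q :: "'s::topological_space \<Rightarrow> 'a::topological_space \<Rightarrow> 's measure"
  assumes Qm: "(\<lambda>(x,u). Q x u) \<in> (borel \<Otimes>\<^sub>M borel) \<rightarrow>\<^sub>M prob_algebra borel"
  shows "(\<lambda>z. Q (fst (fst z) t) (snd z)) \<in> (H t \<Otimes>\<^sub>M borel) \<rightarrow>\<^sub>M prob_algebra (borel :: 's::topological_space measure)"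
proof -
  have "(\<lambda>z. (fst (fst z) t, snd z)) \<in> (H t \<Otimes>\<^sub>M borel) \<rightarrow>\<^sub>M (borel \<Otimes>\<^sub>M (borel::'a::topological_space measure))"
    by (intro measurable_Pair measurable_compose[OF measurable_fst H_fst]) auto
  from measurable_compose[OF this Qm] show ?thesis by simp
qed

lemma K_meas:
  fixes Q :: "'s::topological_space \<Rightarrow> 'a::topological_space \<Rightarrow> 's measure"
  assumes Qm: "(\<lambda>(x,u). Q x u) \<in> (borel \<Otimes>\<^sub>M borel) \<rightarrow>\<^sub>M prob_algebra borel"
    and pm: "\<pi> t \<in> H t \<rightarrow>\<^sub>M prob_algebra borel"
  shows "K Q \<pi> t \<in> H t \<rightarrow>\<^sub>M prob_algebra (H (Suc t) :: ((nat \<Rightarrow> 's::topological_space) \<times> (nat \<Rightarrow> 'a::topological_space)) measure)"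
proof -
  have r: "(\<lambda>(z, y). return (H (Suc t)) (ext t (fst z) (snd z) y)) \<in> (H t \<Otimes>\<^sub>M borel) \<Otimes>\<^sub>M borel \<rightarrow>\<^sub>M prob_algebra (H (Suc t) :: ((nat \<Rightarrow> 's) \<times> (nat \<Rightarrow> 'a)) measure)"
    using measurable_compose[OF ext_meas[of t] measurable_return_prob_space]
    by (simp add: split_beta')
  have i: "(\<lambda>(h, u). bind (Q (fst h t) u) (\<lambda>y. return (H (Suc t)) (ext t h u y))) \<in> H t \<Otimes>\<^sub>M borel \<rightarrow>\<^sub>M prob_algebra (H (Suc t) :: ((nat \<Rightarrow> 's) \<times> (nat \<Rightarrow> 'a)) measure)"
    using measurable_bind_prob_space2[OF Q_inner_meas[OF Qm] r]
    by (simp add: case_prod_beta)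
  have "(\<lambda>h. bind (\<pi> t h) (\<lambda>u. bind (Q (fst h t) u) (\<lambda>y. return (H (Suc t)) (ext t h u y)))) \<in> H t \<rightarrow>\<^sub>M prob_algebra (H (Suc t) :: ((nat \<Rightarrow> 's) \<times> (nat \<Rightarrow> 'a)) measure)"
    by (rule measurable_bind_prob_space2[OF pm i])
  then show ?thesis unfolding K_def[abs_def] .
qed

lemma Ptraj_space:
  fixes Q :: "'s::topological_space \<Rightarrow> 'a::topological_space \<Rightarrow> 's measure"
  assumes Qm: "(\<lambda>(x,u). Q x u) \<in> (borel \<Otimes>\<^sub>M borel) \<rightarrow>\<^sub>M prob_algebra borel"
    and pm: "\<forall>t<T. \<pi> t \<in> H t \<rightarrow>\<^sub>M prob_algebra borel"
  shows "t \<le> T \<Longrightarrow> Ptraj Q \<pi> x t \<in> space (prob_algebra (H t :: ((nat \<Rightarrow> 's::topological_space) \<times> (nat \<Rightarrow> 'a::topological_space)) measure))"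
proof (induction t)
  case 0
  have "(restrict (\<lambda>_. x) {..0}, restrict (\<lambda>_. undefined) {..<0}) \<in> space (H 0 :: ((nat \<Rightarrow> 's) \<times> (nat \<Rightarrow> 'a)) measure)"
    by (simp add: H_def space_pair_measure space_PiM)
  then show ?case by (simp add: space_prob_algebra prob_space_return)
next
  case (Suc t)
  then have A: "Ptraj Q \<pi> x t \<in> space (prob_algebra (H t :: ((nat \<Rightarrow> 's) \<times> (nat \<Rightarrow> 'a)) measure))" by simp
  have B: "K Q \<pi> t \<in> H t \<rightarrow>\<^sub>M prob_algebra (H (Suc t) :: ((nat \<Rightarrow> 's) \<times> (nat \<Rightarrow> 'a)) measure)"
    using K_meas[OF Qm] pm Suc.prems by auto
  show ?case unfolding Ptraj_Suc space_prob_algebra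
    using prob_space_bind'[OF A B] sets_bind'[OF A B] by simp
qed

lemma kernelQ_meas:
  fixes PD :: "'w::topological_space measure" and f :: "'s::topological_space \<Rightarrow> 'a::topological_space \<Rightarrow> 'w \<Rightarrow> 's"
  assumes PD: "prob_space PD" "sets PD = sets borel"
    and f_meas: "(\<lambda>(x, u, d). f x u d) \<in> (borel \<Otimes>\<^sub>M borel \<Otimes>\<^sub>M borel) \<rightarrow>\<^sub>M borel"
  shows "(\<lambda>(x,u). kernelQ PD f x u) \<in> (borel \<Otimes>\<^sub>M borel) \<rightarrow>\<^sub>M prob_algebra borel"
proof -
  have c: "(\<lambda>z. PD) \<in> (borel \<Otimes>\<^sub>M borel) \<rightarrow>\<^sub>M prob_algebra borel"
    using PD by (intro measurable_const) (auto simp: space_prob_algebra)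
  have "(\<lambda>(z, d). f (fst z) (snd z) d) \<in> (borel \<Otimes>\<^sub>M borel) \<Otimes>\<^sub>M borel \<rightarrow>\<^sub>M borel"
  proof -
    have "(\<lambda>(z, d). (fst z, snd z, d)) \<in> ((borel::'s measure) \<Otimes>\<^sub>M (borel::'a measure)) \<Otimes>\<^sub>M (borel::'w measure) \<rightarrow>\<^sub>M (borel \<Otimes>\<^sub>M borel \<Otimes>\<^sub>M borel)"
      by measurable
    from measurable_compose[OF this f_meas] show ?thesis by (simp add: case_prod_beta)
  qed
  from measurable_distr_prob_space2[OF c this] show ?thesis
    by (simp add: kernelQ_def case_prod_beta)
qed

lemma AE_bind_pa:
  assumes "M \<in> space (prob_algebra A)" "N \<in> A \<rightarrow>\<^sub>M prob_algebra B" "Measurable.pred B P"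
  shows "(AE x in M \<bind> N. P x) \<longleftrightarrow> (AE x in M. AE y in N x. P y)"
proof -
  have "sets M = sets A" using assms(1) by (simp add: space_prob_algebra)
  then have "N \<in> M \<rightarrow>\<^sub>M subprob_algebra B"
    using measurable_prob_algebraD[OF assms(2)] by (simp cong: measurable_cong_sets)
  then show ?thesis using AE_bind assms(3) by blast
qed

lemma nn_integral_bind_pa:
  assumes "M \<in> space (prob_algebra A)" "N \<in> A \<rightarrow>\<^sub>M prob_algebra B" "f \<in> borel_measurable B"
  shows "(\<integral>\<^sup>+x. f x \<partial>(M \<bind> N)) = (\<integral>\<^sup>+x. \<integral>\<^sup>+y. f y \<partial>N x \<partial>M)"
proof -
  have "sets M = sets A" using assms(1) by (simp add: space_prob_algebra)
  then have "N \<in> M \<rightarrow>\<^sub>M subprob_algebra B"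
    using measurable_prob_algebraD[OF assms(2)] by (simp cong: measurable_cong_sets)
  then show ?thesis using nn_integral_bind assms(3) by blast
qed

lemma ext_space: "h \<in> space (H t) \<Longrightarrow> ext t h u y \<in> space (H (Suc t))"
  using measurable_space[OF ext_meas[of t], of "((h,u),y)"]
  by (simp add: space_pair_measure)

lemma ret_meas: "h \<in> space (H t) \<Longrightarrow> (\<lambda>y. return (H (Suc t)) (ext t h u y)) \<in> borel \<rightarrow>\<^sub>M prob_algebra (H (Suc t))"
proof -
  assume h: "h \<in> space (H t)"
  have "(\<lambda>y. ((h,u),y)) \<in> borel \<rightarrow>\<^sub>M (H t \<Otimes>\<^sub>M borel) \<Otimes>\<^sub>M borel"
    using h by (intro measurable_Pair1') (simp add: space_pair_measure)
  from measurable_compose[OF measurable_compose[OF this ext_meas[of t]] measurable_return_prob_space]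
  show ?thesis by simp
qed

lemma mid_meas:
  fixes Q :: "'s::topological_space \<Rightarrow> 'a::topological_space \<Rightarrow> 's measure"
  assumes Qm: "(\<lambda>(x,u). Q x u) \<in> (borel \<Otimes>\<^sub>M borel) \<rightarrow>\<^sub>M prob_algebra borel"
    and h: "h \<in> space (H t)"
  shows "(\<lambda>u. Q (fst h t) u \<bind> (\<lambda>y. return (H (Suc t)) (ext t h u y))) \<in> borel \<rightarrow>\<^sub>M prob_algebra (H (Suc t) :: ((nat \<Rightarrow> 's) \<times> (nat \<Rightarrow> 'a)) measure)"
proof -
  have r: "(\<lambda>(z, y). return (H (Suc t)) (ext t (fst z) (snd z) y)) \<in> (H t \<Otimes>\<^sub>M borel) \<Otimes>\<^sub>M borel \<rightarrow>\<^sub>M prob_algebra (H (Suc t) :: ((nat \<Rightarrow> 's) \<times> (nat \<Rightarrow> 'a)) measure)"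
    using measurable_compose[OF ext_meas[of t] measurable_return_prob_space]
    by (simp add: split_beta')
  have i: "(\<lambda>(h, u). bind (Q (fst h t) u) (\<lambda>y. return (H (Suc t)) (ext t h u y))) \<in> H t \<Otimes>\<^sub>M borel \<rightarrow>\<^sub>M prob_algebra (H (Suc t) :: ((nat \<Rightarrow> 's) \<times> (nat \<Rightarrow> 'a)) measure)"
    using measurable_bind_prob_space2[OF Q_inner_meas[OF Qm] r]
    by (simp add: case_prod_beta)
  have "(\<lambda>u. (h,u)) \<in> borel \<rightarrow>\<^sub>M H t \<Otimes>\<^sub>M borel"
    using h by (intro measurable_Pair1')
  from measurable_compose[OF this i] show ?thesis by simp
qed

lemma Qspace:
  fixes Q :: "'s::topological_space \<Rightarrow> 'a::topological_space \<Rightarrow> 's measure"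
  assumes Qm: "(\<lambda>(x,u). Q x u) \<in> (borel \<Otimes>\<^sub>M borel) \<rightarrow>\<^sub>M prob_algebra borel"
  shows "Q x u \<in> space (prob_algebra borel)"
  using measurable_space[OF Qm, of "(x,u)"] by (simp add: space_pair_measure)

lemma K_AE:
  fixes Q :: "'s::topological_space \<Rightarrow> 'a::topological_space \<Rightarrow> 's measure"
  assumes Qm: "(\<lambda>(x,u). Q x u) \<in> (borel \<Otimes>\<^sub>M borel) \<rightarrow>\<^sub>M prob_algebra borel"
    and pm: "\<pi> t \<in> H t \<rightarrow>\<^sub>M prob_algebra borel"
    and h: "h \<in> space (H t)"
    and P: "Measurable.pred (H (Suc t)) P"
  shows "(AE \<omega> in K Q \<pi> t h. P \<omega>) \<longleftrightarrow> (AE u in \<pi> t h. AE y in Q (fst h t) u. P (ext t h u y))"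
proof -
  have ph: "\<pi> t h \<in> space (prob_algebra borel)" using measurable_space[OF pm h] .
  have "(AE \<omega> in K Q \<pi> t h. P \<omega>) \<longleftrightarrow> (AE u in \<pi> t h. AE \<omega> in Q (fst h t) u \<bind> (\<lambda>y. return (H (Suc t)) (ext t h u y)). P \<omega>)"
    unfolding K_def by (rule AE_bind_pa[OF ph mid_meas[OF Qm h] P])
  also have "\<dots> \<longleftrightarrow> (AE u in \<pi> t h. AE y in Q (fst h t) u. AE \<omega> in return (H (Suc t)) (ext t h u y). P \<omega>)"
    by (intro AE_cong AE_bind_pa[OF Qspace[OF Qm] ret_meas[OF h] P])
  also have "\<dots> \<longleftrightarrow> (AE u in \<pi> t h. AE y in Q (fst h t) u. P (ext t h u y))"
    by (intro AE_cong AE_return[OF ext_space[OF h] P])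
  finally show ?thesis .
qed

lemma K_nn:
  fixes Q :: "'s::topological_space \<Rightarrow> 'a::topological_space \<Rightarrow> 's measure"
  assumes Qm: "(\<lambda>(x,u). Q x u) \<in> (borel \<Otimes>\<^sub>M borel) \<rightarrow>\<^sub>M prob_algebra borel"
    and pm: "\<pi> t \<in> H t \<rightarrow>\<^sub>M prob_algebra borel"
    and h: "h \<in> space (H t)"
    and g: "g \<in> borel_measurable (H (Suc t))"
  shows "(\<integral>\<^sup>+\<omega>. g \<omega> \<partial>K Q \<pi> t h) = (\<integral>\<^sup>+u. \<integral>\<^sup>+y. g (ext t h u y) \<partial>Q (fst h t) u \<partial>\<pi> t h)"
proof -
  have ph: "\<pi> t h \<in> space (prob_algebra borel)" using measurable_space[OF pm h] .
  have "(\<integral>\<^sup>+\<omega>. g \<omega> \<partial>K Q \<pi> t h) = (\<integral>\<^sup>+u. \<integral>\<^sup>+\<omega>. g \<omega> \<partial>(Q (fst h t) u \<bind> (\<lambda>y. return (H (Suc t)) (ext t h u y))) \<partial>\<pi> t h)"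
    unfolding K_def by (rule nn_integral_bind_pa[OF ph mid_meas[OF Qm h] g])
  also have "\<dots> = (\<integral>\<^sup>+u. \<integral>\<^sup>+y. \<integral>\<^sup>+\<omega>. g \<omega> \<partial>return (H (Suc t)) (ext t h u y) \<partial>Q (fst h t) u \<partial>\<pi> t h)"
    by (intro nn_integral_cong nn_integral_bind_pa[OF Qspace[OF Qm] ret_meas[OF h] g])
  also have "\<dots> = (\<integral>\<^sup>+u. \<integral>\<^sup>+y. g (ext t h u y) \<partial>Q (fst h t) u \<partial>\<pi> t h)"
    by (intro nn_integral_cong nn_integral_return[OF ext_space[OF h] g])
  finally show ?thesis .
qed

definition Z :: "(nat \<Rightarrow> 's \<Rightarrow> 's \<Rightarrow> 'a \<Rightarrow> real) \<Rightarrow> nat \<Rightarrow> ((nat \<Rightarrow> 's) \<times> (nat \<Rightarrow> 'a)) \<Rightarrow> real" where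
  "Z \<xi> t \<omega> = (\<Prod>s<t. \<xi> s (fst \<omega> (Suc s)) (fst \<omega> s) (snd \<omega> s))"

lemma Z_ext: "Z \<xi> (Suc t) (ext t h u y) = Z \<xi> t h * \<xi> t y (fst h t) u"
proof -
  have "(\<Prod>s<t. \<xi> s (fst (ext t h u y) (Suc s)) (fst (ext t h u y) s) (snd (ext t h u y) s)) = Z \<xi> t h"
    unfolding Z_def by (intro prod.cong) (auto simp: ext_def)
  then show ?thesis by (simp add: Z_def ext_def)
qed

lemma Z_meas:
  assumes "\<forall>s<t. (\<lambda>(y, x, u). \<xi> s y x u) \<in> borel_measurable (borel \<Otimes>\<^sub>M borel \<Otimes>\<^sub>M borel)"
  shows "Z \<xi> t \<in> borel_measurable (H t :: ((nat \<Rightarrow> 's::topological_space) \<times> (nat \<Rightarrow> 'a::topological_space)) measure)"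
  unfolding Z_def[abs_def]
proof (rule borel_measurable_prod)
  fix s assume "s \<in> {..<t}"
  then have s: "s < t" by simp
  have a: "(\<lambda>\<omega>. (fst \<omega> (Suc s), fst \<omega> s, snd \<omega> s)) \<in> (H t :: ((nat \<Rightarrow> 's) \<times> (nat \<Rightarrow> 'a)) measure) \<rightarrow>\<^sub>M borel \<Otimes>\<^sub>M borel \<Otimes>\<^sub>M borel"
    using s by (intro measurable_Pair H_fst H_snd) auto
  have b: "(\<lambda>(y, x, u). \<xi> s y x u) \<in> borel_measurable (borel \<Otimes>\<^sub>M borel \<Otimes>\<^sub>M borel)"
    using assms s by auto
  from measurable_compose[OF a b]
  show "(\<lambda>\<omega>. \<xi> s (fst \<omega> (Suc s)) (fst \<omega> s) (snd \<omega> s)) \<in> borel_measurable (H t :: ((nat \<Rightarrow> 's) \<times> (nat \<Rightarrow> 'a)) measure)"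
    by simp
qed

lemma Z_main:
  fixes Q :: "'s::topological_space \<Rightarrow> 'a::topological_space \<Rightarrow> 's measure"
  assumes Qm: "(\<lambda>(x,u). Q x u) \<in> (borel \<Otimes>\<^sub>M borel) \<rightarrow>\<^sub>M prob_algebra borel"
    and pm: "\<forall>t<T. \<pi> t \<in> H t \<rightarrow>\<^sub>M prob_algebra borel"
    and xm: "\<forall>s<T. (\<lambda>(y, x, u). \<xi> s y x u) \<in> borel_measurable (borel \<Otimes>\<^sub>M borel \<Otimes>\<^sub>M borel)"
    and xb: "\<forall>s<T. \<forall>x u. AE y in Q x u. 0 \<le> \<xi> s y x u \<and> \<xi> s y x u \<le> c"
    and xi: "\<forall>s<T. \<forall>x u. (\<integral>\<^sup>+y. ennreal (\<xi> s y x u) \<partial>Q x u) = 1"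
    and c: "0 \<le> c"
  shows "t \<le> T \<Longrightarrow> (AE \<omega> in Ptraj Q \<pi> x t. 0 \<le> Z \<xi> t \<omega> \<and> Z \<xi> t \<omega> \<le> c ^ t)
     \<and> (\<integral>\<^sup>+\<omega>. ennreal (Z \<xi> t \<omega>) \<partial>Ptraj Q \<pi> x t) = 1"
proof (induction t)
  case 0
  have sp: "(restrict (\<lambda>_. x) {..0}, restrict (\<lambda>_. undefined) {..<0}) \<in> space (H 0 :: ((nat \<Rightarrow> 's) \<times> (nat \<Rightarrow> 'a)) measure)"
    by (simp add: H_def space_pair_measure space_PiM)
  have "(\<integral>\<^sup>+\<omega>. ennreal (Z \<xi> 0 \<omega>) \<partial>Ptraj Q \<pi> x 0) = 1"
    using nn_integral_return[OF sp, of "\<lambda>_. 1"] by (simp add: Z_def)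
  then show ?case by (simp add: Z_def)
next
  case (Suc t)
  then have tT: "t < T" and IH: "(AE \<omega> in Ptraj Q \<pi> x t. 0 \<le> Z \<xi> t \<omega> \<and> Z \<xi> t \<omega> \<le> c ^ t)"
      "(\<integral>\<^sup>+\<omega>. ennreal (Z \<xi> t \<omega>) \<partial>Ptraj Q \<pi> x t) = 1" by auto
  have A: "Ptraj Q \<pi> x t \<in> space (prob_algebra (H t :: ((nat \<Rightarrow> 's) \<times> (nat \<Rightarrow> 'a)) measure))"
    using Ptraj_space[OF Qm pm] tT by simp
  have pt: "\<pi> t \<in> H t \<rightarrow>\<^sub>M prob_algebra borel" using pm tT by simp
  have B: "K Q \<pi> t \<in> H t \<rightarrow>\<^sub>M prob_algebra (H (Suc t) :: ((nat \<Rightarrow> 's) \<times> (nat \<Rightarrow> 'a)) measure)"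
    using K_meas[where \<pi>=\<pi> and t=t, OF Qm pt] .
  have ZS[measurable]: "Z \<xi> (Suc t) \<in> borel_measurable (H (Suc t) :: ((nat \<Rightarrow> 's) \<times> (nat \<Rightarrow> 'a)) measure)"
    using xm tT by (intro Z_meas) auto
  have Zt[measurable]: "Z \<xi> t \<in> borel_measurable (H t :: ((nat \<Rightarrow> 's) \<times> (nat \<Rightarrow> 'a)) measure)"
    using xm tT by (intro Z_meas) auto
  have setsP: "sets (Ptraj Q \<pi> x t) = sets (H t)" using A by (simp add: space_prob_algebra)
  have spP: "space (Ptraj Q \<pi> x t) = space (H t)" using sets_eq_imp_space_eq[OF setsP] .
  have xim: "(\<lambda>y. \<xi> t y x' u) \<in> borel_measurable (Q x' u)" for x' u
  proof -
    have a: "(\<lambda>y. (y, x', u)) \<in> (borel::'s measure) \<rightarrow>\<^sub>M borel \<Otimes>\<^sub>M borel \<Otimes>\<^sub>M (borel::'a measure)" by measurable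
    have b: "(\<lambda>(y, x, u). \<xi> t y x u) \<in> borel_measurable (borel \<Otimes>\<^sub>M borel \<Otimes>\<^sub>M borel)"
      using xm tT by auto
    from measurable_compose[OF a b] have "(\<lambda>y. \<xi> t y x' u) \<in> borel_measurable borel" by simp
    moreover have "sets (Q x' u) = sets borel" using Qspace[OF Qm] by (simp add: space_prob_algebra)
    ultimately show ?thesis by (simp cong: measurable_cong_sets)
  qed
  have PS: "Measurable.pred (H (Suc t) :: ((nat \<Rightarrow> 's) \<times> (nat \<Rightarrow> 'a)) measure) (\<lambda>\<omega>. 0 \<le> Z \<xi> (Suc t) \<omega> \<and> Z \<xi> (Suc t) \<omega> \<le> c ^ Suc t)"
    by measurable
  have AE: "AE \<omega> in Ptraj Q \<pi> x (Suc t). 0 \<le> Z \<xi> (Suc t) \<omega> \<and> Z \<xi> (Suc t) \<omega> \<le> c ^ Suc t"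
    unfolding Ptraj_Suc AE_bind_pa[OF A B PS]
  proof -
    show "AE h in Ptraj Q \<pi> x t. AE \<omega> in K Q \<pi> t h. 0 \<le> Z \<xi> (Suc t) \<omega> \<and> Z \<xi> (Suc t) \<omega> \<le> c ^ Suc t"
      using IH(1) AE_space
    proof eventually_elim
      case (elim h)
      then have h: "h \<in> space (H t)" using spP by simp
      have inner: "AE y in Q (fst h t) u. 0 \<le> Z \<xi> t h * \<xi> t y (fst h t) u \<and> Z \<xi> t h * \<xi> t y (fst h t) u \<le> c ^ Suc t" for u
        proof -
          from xb tT have "AE y in Q (fst h t) u. 0 \<le> \<xi> t y (fst h t) u \<and> \<xi> t y (fst h t) u \<le> c" by auto
          then show ?thesis
          proof eventually_elim
            case (elim y)
            then show ?case using elim(1) \<open>0 \<le> Z \<xi> t h \<and> Z \<xi> t h \<le> c ^ t\<close> c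
              mult_mono[of "Z \<xi> t h" "c^t" "\<xi> t y (fst h t) u" c]
              by (auto simp: mult.commute)
          qed
        qed
      show ?case unfolding K_AE[where \<pi>=\<pi> and t=t, OF Qm pt h PS]
        by (rule AE_I2) (unfold Z_ext, rule inner)
    qed
  qed
  have "(\<integral>\<^sup>+\<omega>. ennreal (Z \<xi> (Suc t) \<omega>) \<partial>Ptraj Q \<pi> x (Suc t))
      = (\<integral>\<^sup>+h. \<integral>\<^sup>+\<omega>. ennreal (Z \<xi> (Suc t) \<omega>) \<partial>K Q \<pi> t h \<partial>Ptraj Q \<pi> x t)"
    unfolding Ptraj_Suc by (rule nn_integral_bind_pa[OF A B]) measurable
  also have "\<dots> = (\<integral>\<^sup>+h. ennreal (Z \<xi> t h) \<partial>Ptraj Q \<pi> x t)"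
  proof (rule nn_integral_cong_AE)
    show "AE h in Ptraj Q \<pi> x t. (\<integral>\<^sup>+\<omega>. ennreal (Z \<xi> (Suc t) \<omega>) \<partial>K Q \<pi> t h) = ennreal (Z \<xi> t h)"
      using IH(1) AE_space
    proof eventually_elim
      case (elim h)
      then have h: "h \<in> space (H t)" and z: "0 \<le> Z \<xi> t h" using spP by auto
      have ph: "prob_space (\<pi> t h)" using measurable_space[OF pt h] by (simp add: space_prob_algebra)
      have "(\<integral>\<^sup>+\<omega>. ennreal (Z \<xi> (Suc t) \<omega>) \<partial>K Q \<pi> t h)
         = (\<integral>\<^sup>+u. \<integral>\<^sup>+y. ennreal (Z \<xi> (Suc t) (ext t h u y)) \<partial>Q (fst h t) u \<partial>\<pi> t h)"
        by (rule K_nn[where \<pi>=\<pi> and t=t, OF Qm pt h]) measurable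
      also have "\<dots> = (\<integral>\<^sup>+u. ennreal (Z \<xi> t h) * (\<integral>\<^sup>+y. ennreal (\<xi> t y (fst h t) u) \<partial>Q (fst h t) u) \<partial>\<pi> t h)"
        unfolding Z_ext ennreal_mult'[OF z]
        by (intro nn_integral_cong nn_integral_cmult) (use xim in measurable)
      also have "\<dots> = (\<integral>\<^sup>+u. ennreal (Z \<xi> t h) \<partial>\<pi> t h)"
        using xi tT by simp
      also have "\<dots> = ennreal (Z \<xi> t h)"
        using prob_space.emeasure_space_1[OF ph] by simp
      finally show ?case .
    qed
  qed
  also have "\<dots> = 1" using IH(2) .
  finally show ?case using AE by simp
qed



lemma Linf_int: assumes P: "prob_space P" and L: "Linf P Y" shows "integrable P Y"
proof -
  from L obtain B where m: "Y \<in> borel_measurable P" and B: "AE \<omega> in P. \<bar>Y \<omega>\<bar> \<le> B"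
    unfolding Linf_def by auto
  have c: "integrable P (\<lambda>_. B)" using finite_measure.integrable_const[OF prob_space.finite_measure[OF P]] .
  have n: "AE \<omega> in P. norm (Y \<omega>) \<le> norm B" using B by eventually_elim auto
  from Bochner_Integration.integrable_bound[OF c m n] show ?thesis .
qed

lemma Linf_add: "Linf P Y1 \<Longrightarrow> Linf P Y2 \<Longrightarrow> Linf P (\<lambda>\<omega>. Y1 \<omega> + Y2 \<omega>)"
proof -
  assume "Linf P Y1" "Linf P Y2"
  then obtain B1 B2 where "Y1 \<in> borel_measurable P" "AE \<omega> in P. \<bar>Y1 \<omega>\<bar> \<le> B1"
     "Y2 \<in> borel_measurable P" "AE \<omega> in P. \<bar>Y2 \<omega>\<bar> \<le> B2" unfolding Linf_def by auto
  moreover have "AE \<omega> in P. \<bar>Y1 \<omega> + Y2 \<omega>\<bar> \<le> B1 + B2"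
    using \<open>AE \<omega> in P. \<bar>Y1 \<omega>\<bar> \<le> B1\<close> \<open>AE \<omega> in P. \<bar>Y2 \<omega>\<bar> \<le> B2\<close> by eventually_elim auto
  ultimately show ?thesis unfolding Linf_def by auto
qed

lemma Linf_mult: "Linf P Y1 \<Longrightarrow> Linf P Y2 \<Longrightarrow> Linf P (\<lambda>\<omega>. Y1 \<omega> * Y2 \<omega>)"
proof -
  assume "Linf P Y1" "Linf P Y2"
  then obtain B1 B2 where m: "Y1 \<in> borel_measurable P" "Y2 \<in> borel_measurable P"
    and b: "AE \<omega> in P. \<bar>Y1 \<omega>\<bar> \<le> B1" "AE \<omega> in P. \<bar>Y2 \<omega>\<bar> \<le> B2" unfolding Linf_def by auto
  have "AE \<omega> in P. \<bar>Y1 \<omega> * Y2 \<omega>\<bar> \<le> B1 * B2"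
    using b(1,2)
  proof eventually_elim
    case (elim \<omega>)
    then have "\<bar>Y1 \<omega>\<bar> * \<bar>Y2 \<omega>\<bar> \<le> B1 * B2" by (intro mult_mono) auto
    then show ?case by (simp add: abs_mult)
  qed
  then show ?thesis using m unfolding Linf_def by auto
qed

lemma Linf_const: "Linf P (\<lambda>_. c)"
  unfolding Linf_def by auto

lemma Linf_max0: "Linf P Y \<Longrightarrow> Linf P (\<lambda>\<omega>. max (Y \<omega> - s) 0)"
proof -
  assume "Linf P Y"
  then obtain B where m: "Y \<in> borel_measurable P" and b: "AE \<omega> in P. \<bar>Y \<omega>\<bar> \<le> B" unfolding Linf_def by auto
  have "AE \<omega> in P. \<bar>max (Y \<omega> - s) 0\<bar> \<le> B + \<bar>s\<bar>" using b by eventually_elim auto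
  then show ?thesis using m unfolding Linf_def by auto
qed

definition RR :: "'b measure \<Rightarrow> 'd set \<Rightarrow> ('d \<Rightarrow> 'b \<Rightarrow> real) \<Rightarrow> ('b \<Rightarrow> real) \<Rightarrow> real" where
  "RR P D Zf Y = (SUP d\<in>D. \<integral>\<omega>. Y \<omega> * Zf d \<omega> \<partial>P)"

lemma abstract:
  assumes P: "prob_space P"
    and Zm: "\<forall>d\<in>D. Zf d \<in> borel_measurable P"
    and Zb: "\<forall>d\<in>D. AE \<omega> in P. 0 \<le> Zf d \<omega> \<and> Zf d \<omega> \<le> 1 / \<alpha>"
    and Zi: "\<forall>d\<in>D. integral\<^sup>L P (Zf d) = 1"
    and d0: "d0 \<in> D" "\<forall>\<omega>. Zf d0 \<omega> = 1"
    and alpha: "0 < \<alpha>" "\<alpha> \<le> 1"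
  shows "(\<forall>Y1 Y2. Linf P Y1 \<longrightarrow> Linf P Y2 \<longrightarrow>
            (AE \<omega> in P. Y1 \<omega> \<le> Y2 \<omega>) \<longrightarrow> RR P D Zf Y1 \<le> RR P D Zf Y2)
       \<and> (\<forall>Y1 Y2. Linf P Y1 \<longrightarrow> Linf P Y2 \<longrightarrow>
            RR P D Zf (\<lambda>\<omega>. Y1 \<omega> + Y2 \<omega>) \<le> RR P D Zf Y1 + RR P D Zf Y2)
       \<and> (\<forall>Y1 a. Linf P Y1 \<longrightarrow> RR P D Zf (\<lambda>\<omega>. Y1 \<omega> + a) = RR P D Zf Y1 + a)
       \<and> (\<forall>Y1 c. Linf P Y1 \<longrightarrow> 0 \<le> c \<longrightarrow> RR P D Zf (\<lambda>\<omega>. c * Y1 \<omega>) = c * RR P D Zf Y1)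
       \<and> (\<forall>Y. Linf P Y \<longrightarrow> (\<integral>\<omega>. Y \<omega> \<partial>P) \<le> RR P D Zf Y \<and> RR P D Zf Y \<le> CVaR \<alpha> P Y)"
proof -
  have Dne: "D \<noteq> {}" using d0 by auto
  have ZL: "Linf P (Zf d)" if "d \<in> D" for d
  proof -
    from Zb that have "AE \<omega> in P. 0 \<le> Zf d \<omega> \<and> Zf d \<omega> \<le> 1 / \<alpha>" by auto
    then have "AE \<omega> in P. \<bar>Zf d \<omega>\<bar> \<le> 1 / \<alpha>" by eventually_elim auto
    then show ?thesis using Zm that unfolding Linf_def by auto
  qed
  have YZint: "integrable P (\<lambda>\<omega>. Y \<omega> * Zf d \<omega>)" if "Linf P Y" "d \<in> D" for Y d
    using Linf_int[OF P Linf_mult[OF that(1) ZL[OF that(2)]]] .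
  have Zint: "integrable P (Zf d)" if "d \<in> D" for d
    using Linf_int[OF P ZL[OF that]] .
  have bdd: "bdd_above ((\<lambda>d. \<integral>\<omega>. Y \<omega> * Zf d \<omega> \<partial>P) ` D)" if L: "Linf P Y" for Y
  proof -
    from L obtain B where b: "AE \<omega> in P. \<bar>Y \<omega>\<bar> \<le> B" unfolding Linf_def by auto
    have "(\<integral>\<omega>. Y \<omega> * Zf d \<omega> \<partial>P) \<le> \<bar>B\<bar>" if d: "d \<in> D" for d
    proof -
      have "(\<integral>\<omega>. Y \<omega> * Zf d \<omega> \<partial>P) \<le> (\<integral>\<omega>. \<bar>B\<bar> * Zf d \<omega> \<partial>P)"
      proof (rule integral_mono_AE[OF YZint[OF L d]])
        show "integrable P (\<lambda>\<omega>. \<bar>B\<bar> * Zf d \<omega>)" using Zint[OF d] by simp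
        show "AE \<omega> in P. Y \<omega> * Zf d \<omega> \<le> \<bar>B\<bar> * Zf d \<omega>"
          using b Zb d
        proof -
          from Zb d have "AE \<omega> in P. 0 \<le> Zf d \<omega> \<and> Zf d \<omega> \<le> 1 / \<alpha>" by auto
          with b show ?thesis
          proof eventually_elim
            case (elim \<omega>) then show ?case
              by (intro mult_right_mono) auto
          qed
        qed
      qed
      also have "\<dots> = \<bar>B\<bar>" using Zi d by simp
      finally show ?thesis .
    qed
    then show ?thesis by (intro bdd_aboveI2) auto
  qed
  have P1: "RR P D Zf Y1 \<le> RR P D Zf Y2" if L: "Linf P Y1" "Linf P Y2" and le: "AE \<omega> in P. Y1 \<omega> \<le> Y2 \<omega>" for Y1 Y2
    unfolding RR_def
  proof (rule cSUP_mono[OF Dne bdd[OF L(2)]])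
    fix d assume d: "d \<in> D"
    have "(\<integral>\<omega>. Y1 \<omega> * Zf d \<omega> \<partial>P) \<le> (\<integral>\<omega>. Y2 \<omega> * Zf d \<omega> \<partial>P)"
    proof (rule integral_mono_AE[OF YZint[OF L(1) d] YZint[OF L(2) d]])
      from Zb d have "AE \<omega> in P. 0 \<le> Zf d \<omega> \<and> Zf d \<omega> \<le> 1 / \<alpha>" by auto
      with le show "AE \<omega> in P. Y1 \<omega> * Zf d \<omega> \<le> Y2 \<omega> * Zf d \<omega>"
        by eventually_elim (auto intro: mult_right_mono)
    qed
    then show "\<exists>m\<in>D. (\<integral>\<omega>. Y1 \<omega> * Zf d \<omega> \<partial>P) \<le> (\<integral>\<omega>. Y2 \<omega> * Zf m \<omega> \<partial>P)" using d by auto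
  qed
  have P2: "RR P D Zf (\<lambda>\<omega>. Y1 \<omega> + Y2 \<omega>) \<le> RR P D Zf Y1 + RR P D Zf Y2" if L: "Linf P Y1" "Linf P Y2" for Y1 Y2
    unfolding RR_def
  proof (rule cSUP_least[OF Dne])
    fix d assume d: "d \<in> D"
    have "(\<integral>\<omega>. (Y1 \<omega> + Y2 \<omega>) * Zf d \<omega> \<partial>P) = (\<integral>\<omega>. Y1 \<omega> * Zf d \<omega> \<partial>P) + (\<integral>\<omega>. Y2 \<omega> * Zf d \<omega> \<partial>P)"
      using YZint[OF L(1) d] YZint[OF L(2) d] by (simp add: distrib_right)
    also have "\<dots> \<le> (SUP d\<in>D. \<integral>\<omega>. Y1 \<omega> * Zf d \<omega> \<partial>P) + (SUP d\<in>D. \<integral>\<omega>. Y2 \<omega> * Zf d \<omega> \<partial>P)"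
      by (intro add_mono cSUP_upper d bdd L)
    finally show "(\<integral>\<omega>. (Y1 \<omega> + Y2 \<omega>) * Zf d \<omega> \<partial>P) \<le> (SUP d\<in>D. \<integral>\<omega>. Y1 \<omega> * Zf d \<omega> \<partial>P) + (SUP d\<in>D. \<integral>\<omega>. Y2 \<omega> * Zf d \<omega> \<partial>P)" .
  qed
  have P3: "RR P D Zf (\<lambda>\<omega>. Y1 \<omega> + a) = RR P D Zf Y1 + a" if L: "Linf P Y1" for Y1 a
  proof -
    have eq: "(\<integral>\<omega>. (Y1 \<omega> + a) * Zf d \<omega> \<partial>P) = (\<integral>\<omega>. Y1 \<omega> * Zf d \<omega> \<partial>P) + a" if d: "d \<in> D" for d
      using YZint[OF L d] Zint[OF d] Zi d by (simp add: distrib_right)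
    have "RR P D Zf (\<lambda>\<omega>. Y1 \<omega> + a) = (SUP d\<in>D. (\<integral>\<omega>. Y1 \<omega> * Zf d \<omega> \<partial>P) + a)"
      unfolding RR_def using eq by (intro SUP_cong) auto
    also have "\<dots> = RR P D Zf Y1 + a"
      unfolding RR_def
    proof (rule antisym)
      show "(SUP d\<in>D. (\<integral>\<omega>. Y1 \<omega> * Zf d \<omega> \<partial>P) + a) \<le> (SUP d\<in>D. \<integral>\<omega>. Y1 \<omega> * Zf d \<omega> \<partial>P) + a"
        by (intro cSUP_least[OF Dne] add_right_mono cSUP_upper bdd L)
      have "(SUP d\<in>D. \<integral>\<omega>. Y1 \<omega> * Zf d \<omega> \<partial>P) \<le> (SUP d\<in>D. (\<integral>\<omega>. Y1 \<omega> * Zf d \<omega> \<partial>P) + a) - a"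
      proof (rule cSUP_least[OF Dne])
        fix d assume d: "d \<in> D"
        have "bdd_above ((\<lambda>d. (\<integral>\<omega>. Y1 \<omega> * Zf d \<omega> \<partial>P) + a) ` D)"
        proof -
          from bdd[OF L] obtain M where M: "\<forall>d\<in>D. (\<integral>\<omega>. Y1 \<omega> * Zf d \<omega> \<partial>P) \<le> M"
            by (auto simp: bdd_above_def)
          then show ?thesis by (intro bdd_aboveI2[of _ _ "M + a"]) auto
        qed
        from cSUP_upper[OF d this] show "(\<integral>\<omega>. Y1 \<omega> * Zf d \<omega> \<partial>P) \<le> (SUP d\<in>D. (\<integral>\<omega>. Y1 \<omega> * Zf d \<omega> \<partial>P) + a) - a"
          by simp
      qed
      then show "(SUP d\<in>D. \<integral>\<omega>. Y1 \<omega> * Zf d \<omega> \<partial>P) + a \<le> (SUP d\<in>D. (\<integral>\<omega>. Y1 \<omega> * Zf d \<omega> \<partial>P) + a)"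
        by simp
    qed
    finally show ?thesis .
  qed
  have P4: "RR P D Zf (\<lambda>\<omega>. c * Y1 \<omega>) = c * RR P D Zf Y1" if L: "Linf P Y1" and c: "0 \<le> c" for Y1 c
  proof -
    have eq: "(\<integral>\<omega>. (c * Y1 \<omega>) * Zf d \<omega> \<partial>P) = c * (\<integral>\<omega>. Y1 \<omega> * Zf d \<omega> \<partial>P)" for d
      by (simp add: mult.assoc)
    have "RR P D Zf (\<lambda>\<omega>. c * Y1 \<omega>) = (SUP d\<in>D. c * (\<integral>\<omega>. Y1 \<omega> * Zf d \<omega> \<partial>P))"
      unfolding RR_def using eq by simp
    also have "\<dots> = c * (SUP d\<in>D. \<integral>\<omega>. Y1 \<omega> * Zf d \<omega> \<partial>P)"
    proof (cases "c = 0")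
      case True then show ?thesis using Dne by simp
    next
      case False
      with c have c: "0 < c" by simp
      show ?thesis
      proof (rule antisym)
        show "(SUP d\<in>D. c * (\<integral>\<omega>. Y1 \<omega> * Zf d \<omega> \<partial>P)) \<le> c * (SUP d\<in>D. \<integral>\<omega>. Y1 \<omega> * Zf d \<omega> \<partial>P)"
          using c by (intro cSUP_least[OF Dne] mult_left_mono cSUP_upper bdd L) auto
        have "(SUP d\<in>D. \<integral>\<omega>. Y1 \<omega> * Zf d \<omega> \<partial>P) \<le> (SUP d\<in>D. c * (\<integral>\<omega>. Y1 \<omega> * Zf d \<omega> \<partial>P)) / c"
        proof (rule cSUP_least[OF Dne])
          fix d assume d: "d \<in> D"
          from bdd[OF L] obtain M where M: "\<forall>d\<in>D. (\<integral>\<omega>. Y1 \<omega> * Zf d \<omega> \<partial>P) \<le> M"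
            by (auto simp: bdd_above_def)
          have "bdd_above ((\<lambda>d. c * (\<integral>\<omega>. Y1 \<omega> * Zf d \<omega> \<partial>P)) ` D)"
            using M c by (intro bdd_aboveI2[of _ _ "c * M"]) (auto intro: mult_left_mono)
          from cSUP_upper[OF d this] c
          show "(\<integral>\<omega>. Y1 \<omega> * Zf d \<omega> \<partial>P) \<le> (SUP d\<in>D. c * (\<integral>\<omega>. Y1 \<omega> * Zf d \<omega> \<partial>P)) / c"
            by (simp add: field_simps)
        qed
        then show "c * (SUP d\<in>D. \<integral>\<omega>. Y1 \<omega> * Zf d \<omega> \<partial>P) \<le> (SUP d\<in>D. c * (\<integral>\<omega>. Y1 \<omega> * Zf d \<omega> \<partial>P))"
          using c by (simp add: field_simps)
      qed
    qed
    finally show ?thesis by (simp add: RR_def)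
  qed
  have P5: "(\<integral>\<omega>. Y \<omega> \<partial>P) \<le> RR P D Zf Y \<and> RR P D Zf Y \<le> CVaR \<alpha> P Y" if L: "Linf P Y" for Y
  proof
    show "(\<integral>\<omega>. Y \<omega> \<partial>P) \<le> RR P D Zf Y"
      unfolding RR_def using cSUP_upper[OF d0(1) bdd[OF L]] d0(2) by simp
    show "RR P D Zf Y \<le> CVaR \<alpha> P Y"
      unfolding CVaR_def RR_def
    proof (intro cINF_greatest cSUP_least Dne)
      show "UNIV \<noteq> {}" by simp
      fix s :: real and d assume d: "d \<in> D"
      have Lm: "Linf P (\<lambda>\<omega>. max (Y \<omega> - s) 0)" using Linf_max0[OF L] .
      from Zb d have zb: "AE \<omega> in P. 0 \<le> Zf d \<omega> \<and> Zf d \<omega> \<le> 1 / \<alpha>" by auto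
      have "(\<integral>\<omega>. Y \<omega> * Zf d \<omega> \<partial>P) = (\<integral>\<omega>. s * Zf d \<omega> + (Y \<omega> - s) * Zf d \<omega> \<partial>P)"
        by (simp add: algebra_simps)
      also have "\<dots> = s + (\<integral>\<omega>. (Y \<omega> - s) * Zf d \<omega> \<partial>P)"
        using Zint[OF d] YZint[OF Linf_add[OF L Linf_const[of P "-s"]] d] Zi d by simp
      also have "(\<integral>\<omega>. (Y \<omega> - s) * Zf d \<omega> \<partial>P) \<le> (\<integral>\<omega>. max (Y \<omega> - s) 0 * (1 / \<alpha>) \<partial>P)"
      proof (rule integral_mono_AE)
        show "integrable P (\<lambda>\<omega>. (Y \<omega> - s) * Zf d \<omega>)"
          using YZint[OF Linf_add[OF L Linf_const[of P "-s"]] d] by simp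
        show "integrable P (\<lambda>\<omega>. max (Y \<omega> - s) 0 * (1 / \<alpha>))"
          using Linf_int[OF P Lm] by simp
        show "AE \<omega> in P. (Y \<omega> - s) * Zf d \<omega> \<le> max (Y \<omega> - s) 0 * (1 / \<alpha>)"
          using zb
        proof eventually_elim
          case (elim \<omega>)
          have "(Y \<omega> - s) * Zf d \<omega> \<le> max (Y \<omega> - s) 0 * Zf d \<omega>"
            using elim by (intro mult_right_mono) auto
          also have "\<dots> \<le> max (Y \<omega> - s) 0 * (1 / \<alpha>)"
            using elim by (intro mult_left_mono) auto
          finally show ?case .
        qed
      qed
      also have "(\<integral>\<omega>. max (Y \<omega> - s) 0 * (1 / \<alpha>) \<partial>P) = 1 / \<alpha> * (\<integral>\<omega>. max (Y \<omega> - s) 0 \<partial>P)"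
        by simp
      finally show "(\<integral>\<omega>. Y \<omega> * Zf d \<omega> \<partial>P) \<le> s + 1 / \<alpha> * (\<integral>\<omega>. max (Y \<omega> - s) 0 \<partial>P)"
        by simp
    qed
  qed
  show ?thesis using P1 P2 P3 P4 P5 by blast
qed


theorem lemma5:
  fixes PD :: "'w::polish_space measure"
    and f :: "'s::polish_space \<Rightarrow> 'a::polish_space \<Rightarrow> 'w \<Rightarrow> 's"
    and \<pi> :: "nat \<Rightarrow> (nat \<Rightarrow> 's) \<times> (nat \<Rightarrow> 'a) \<Rightarrow> 'a measure"
    and T :: nat and \<alpha> :: real and x :: 's
  assumes T_pos: "0 < T"
    and alpha: "0 < \<alpha>" "\<alpha> \<le> 1"
    and PD: "prob_space PD" "sets PD = sets borel"
    and f_meas: "(\<lambda>(x, u, d). f x u d) \<in> (borel \<Otimes>\<^sub>M borel \<Otimes>\<^sub>M borel) \<rightarrow>\<^sub>M borel"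
    and pol: "is_policy T \<pi>"
  shows "(\<forall>Y1 Y2. Linf (Px PD f \<pi> T x) Y1 \<longrightarrow> Linf (Px PD f \<pi> T x) Y2 \<longrightarrow>
            (AE \<omega> in Px PD f \<pi> T x. Y1 \<omega> \<le> Y2 \<omega>) \<longrightarrow>
            rho (kernelQ PD f) T \<alpha> (Px PD f \<pi> T x) Y1 \<le> rho (kernelQ PD f) T \<alpha> (Px PD f \<pi> T x) Y2)
       \<and> (\<forall>Y1 Y2. Linf (Px PD f \<pi> T x) Y1 \<longrightarrow> Linf (Px PD f \<pi> T x) Y2 \<longrightarrow>
            rho (kernelQ PD f) T \<alpha> (Px PD f \<pi> T x) (\<lambda>\<omega>. Y1 \<omega> + Y2 \<omega>)
              \<le> rho (kernelQ PD f) T \<alpha> (Px PD f \<pi> T x) Y1 + rho (kernelQ PD f) T \<alpha> (Px PD f \<pi> T x) Y2)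
       \<and> (\<forall>Y1 a. Linf (Px PD f \<pi> T x) Y1 \<longrightarrow>
            rho (kernelQ PD f) T \<alpha> (Px PD f \<pi> T x) (\<lambda>\<omega>. Y1 \<omega> + a)
              = rho (kernelQ PD f) T \<alpha> (Px PD f \<pi> T x) Y1 + a)
       \<and> (\<forall>Y1 c. Linf (Px PD f \<pi> T x) Y1 \<longrightarrow> 0 \<le> c \<longrightarrow>
            rho (kernelQ PD f) T \<alpha> (Px PD f \<pi> T x) (\<lambda>\<omega>. c * Y1 \<omega>)
              = c * rho (kernelQ PD f) T \<alpha> (Px PD f \<pi> T x) Y1)
       \<and> (\<forall>Y. Linf (Px PD f \<pi> T x) Y \<longrightarrow>
            (\<integral>\<omega>. Y \<omega> \<partial>Px PD f \<pi> T x) \<le> rho (kernelQ PD f) T \<alpha> (Px PD f \<pi> T x) Y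
            \<and> rho (kernelQ PD f) T \<alpha> (Px PD f \<pi> T x) Y \<le> CVaR \<alpha> (Px PD f \<pi> T x) Y)"
  proof -
  let ?Q = "kernelQ PD f"
  let ?P = "Px PD f \<pi> T x"
  have Qm: "(\<lambda>(x,u). ?Q x u) \<in> (borel \<Otimes>\<^sub>M borel) \<rightarrow>\<^sub>M prob_algebra borel"
    by (rule kernelQ_meas[OF PD f_meas])
  have pm: "\<forall>t<T. \<pi> t \<in> H t \<rightarrow>\<^sub>M prob_algebra borel" using pol unfolding is_policy_def .
  have Pdef: "?P = Ptraj ?Q \<pi> x T" by (simp add: Px_def)
  have Psp: "?P \<in> space (prob_algebra (H T))" using Ptraj_space[OF Qm pm, of T x] Pdef by simp
  then have Pprob: "prob_space ?P" and Psets: "sets ?P = sets (H T)" by (auto simp: space_prob_algebra)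
  define c where "c = \<alpha> powr (- 1 / real T)"
  have c0: "0 \<le> c" by (simp add: c_def)
  have cT: "c ^ T = 1 / \<alpha>"
  proof -
    have "c ^ T = \<alpha> powr (real T * (- 1 / real T))"
      unfolding c_def using alpha by (simp add: powr_power)
    also have "real T * (- 1 / real T) = - 1" using T_pos by simp
    finally show ?thesis using alpha by (simp add: powr_minus divide_inverse)
  qed
  have c1: "1 \<le> c"
  proof -
    have "\<alpha> powr 0 \<le> \<alpha> powr (- 1 / real T)"
      using alpha T_pos by (intro powr_mono') auto
    then show ?thesis using alpha by (simp add: c_def)
  qed
  have Qsp: "prob_space (?Q x' u) \<and> sets (?Q x' u) = sets borel" for x' u
    using Qspace[OF Qm, of x' u] by (simp add: space_prob_algebra)
  have rho_eq: "rho ?Q T \<alpha> ?P = RR ?P (Dset ?Q T \<alpha>) (\<lambda>\<xi>. Z \<xi> T)"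
    by (simp add: rho_def RR_def Z_def fun_eq_iff)
  have props: "Z \<xi> T \<in> borel_measurable ?P \<and> (AE \<omega> in ?P. 0 \<le> Z \<xi> T \<omega> \<and> Z \<xi> T \<omega> \<le> 1 / \<alpha>)
      \<and> integral\<^sup>L ?P (Z \<xi> T) = 1" if xi: "\<xi> \<in> Dset ?Q T \<alpha>" for \<xi>
  proof -
    have xm: "\<forall>s<T. (\<lambda>(y, x, u). \<xi> s y x u) \<in> borel_measurable (borel \<Otimes>\<^sub>M borel \<Otimes>\<^sub>M borel)"
      using xi by (simp add: Dset_def)
    have R: "\<forall>s<T. \<forall>x u. (\<lambda>y. \<xi> s y x u) \<in> Rset \<alpha> T (?Q x u)"
      using xi by (simp add: Dset_def)
    have xb: "\<forall>s<T. \<forall>x u. AE y in ?Q x u. 0 \<le> \<xi> s y x u \<and> \<xi> s y x u \<le> c"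
      using R by (simp add: Rset_def c_def)
    have xi1: "\<forall>s<T. \<forall>x u. (\<integral>\<^sup>+y. ennreal (\<xi> s y x u) \<partial>?Q x u) = 1"
    proof (intro allI impI)
      fix s x' u assume s: "s < T"
      from R s have m: "(\<lambda>y. \<xi> s y x' u) \<in> borel_measurable borel"
        and ae: "AE y in ?Q x' u. 0 \<le> \<xi> s y x' u \<and> \<xi> s y x' u \<le> \<alpha> powr (- 1 / real T)"
        and i1: "(\<integral>y. \<xi> s y x' u \<partial>?Q x' u) = 1"
        by (auto simp: Rset_def)
      have int: "integrable (?Q x' u) (\<lambda>y. \<xi> s y x' u)"
        using i1 not_integrable_integral_eq by fastforce
      have ae0: "AE y in ?Q x' u. 0 \<le> \<xi> s y x' u" using ae by eventually_elim auto
      show "(\<integral>\<^sup>+y. ennreal (\<xi> s y x' u) \<partial>?Q x' u) = 1"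
        using nn_integral_eq_integral[OF int ae0] i1 by simp
    qed
    have ZM: "(AE \<omega> in Ptraj ?Q \<pi> x T. 0 \<le> Z \<xi> T \<omega> \<and> Z \<xi> T \<omega> \<le> c ^ T)
     \<and> (\<integral>\<^sup>+\<omega>. ennreal (Z \<xi> T \<omega>) \<partial>Ptraj ?Q \<pi> x T) = 1"
      by (rule Z_main[OF Qm pm xm xb xi1 c0]) simp
    have Zm: "Z \<xi> T \<in> borel_measurable ?P"
      using Z_meas[OF xm] Psets by (simp cong: measurable_cong_sets)
    have AEb: "AE \<omega> in ?P. 0 \<le> Z \<xi> T \<omega> \<and> Z \<xi> T \<omega> \<le> 1 / \<alpha>"
      unfolding Pdef using ZM cT by simp
    have nn: "(\<integral>\<^sup>+\<omega>. ennreal (Z \<xi> T \<omega>) \<partial>?P) = 1" unfolding Pdef using ZM by simp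
    have ae0: "AE \<omega> in ?P. 0 \<le> Z \<xi> T \<omega>" using AEb by eventually_elim auto
    have int: "integrable ?P (Z \<xi> T)"
      by (rule integrableI_nonneg[OF Zm ae0]) (simp add: nn)
    have "ennreal (integral\<^sup>L ?P (Z \<xi> T)) = 1"
      using nn_integral_eq_integral[OF int ae0] nn by simp
    then have "integral\<^sup>L ?P (Z \<xi> T) = 1"
      using integral_nonneg_AE[OF ae0] by simp
    then show ?thesis using Zm AEb by simp
  qed
  have one: "(\<lambda>_ _ _ _. 1) \<in> Dset ?Q T \<alpha>"
    unfolding Dset_def Rset_def
  proof (intro CollectI allI impI conjI)
    fix t x' u
    show "(\<lambda>(y, x, u). (1::real)) \<in> borel_measurable (borel \<Otimes>\<^sub>M borel \<Otimes>\<^sub>M borel)" by simp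
    show "(\<lambda>y. (1::real)) \<in> borel_measurable borel" by simp
    show "AE y in ?Q x' u. 0 \<le> (1::real) \<and> (1::real) \<le> \<alpha> powr (- 1 / real T)"
      using c1 by (simp add: c_def)
    show "(\<integral>y. (1::real) \<partial>?Q x' u) = 1"
      using Qsp[of x' u] prob_space.prob_space by fastforce
  qed
  show ?thesis unfolding rho_eq
    by (rule abstract[OF Pprob _ _ _ one _ alpha]) (use props in \<open>auto simp: Z_def\<close>)
qed

end
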